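(* Let $M=(\mathbf a,\mathbf p,0)$ be a TFM that is U-DSIC and 1-SCP, let $\theta_i:[0,1]^n\to\mathbb R$ ($i=1,\dots,n$) be functions, let $\tilde r:[0,1]^n\to\mathbb R$ be arbitrary, and define $\tilde M=(\mathbf a,\tilde{\mathbf p},\tilde r)$ by $\tilde p_i(b_i,\mathbf b_{-i})=p_i(b_i,\mathbf b_{-i})+\frac{\theta_i(b_i,\mathbf b_{-i})}{a_i(b_i,\mathbf b_{-i})}$. If for every $i$ and every $b_i$, \[\mathbb E_{\mathbf b_{-i}\sim V_{-i}}[\theta_i(b_i,\mathbf b_{-i})]=0,\] then $\tilde M$ is U-BNIC.
   Context: Users' valuations are drawn from a distribution $V$; $V_{-i}$ denotes the distribution of the other users' valuations (given $v_i$). A TFM $(\mathbf a,\mathbf p,r)$ consists of allocation probabilities $\mathbf a$, payments-if-confirmed $\mathbf p$, and miner revenue $r$, all functions of the bid vector. User utility: $u_i(b_i,\mathbf b_{-i};v_i)=a_i(b_i,\mathbf b_{-i})(v_i-p_i(b_i,\mathbf b_{-i}))$. U-DSIC: for all $i,v_i,\mathbf b_{-i}$, $v_i\in\arg\max_{b_i}u_i(b_i,\mathbf b_{-i};v_i)$. U-BNIC: for all $i,v_i$, $v_i\in\arg\max_{b_i}\mathbb E_{\mathbf b_{-i}\sim V_{-i}}[u_i(b_i,\mathbf b_{-i};v_i)]$ (others bidding truthfully). 1-SCP: for all $i,v_i,\mathbf b_{-i}$, $v_i\in\arg\max_{b_i}[u_i(b_i,\mathbf b_{-i};v_i)+r(b_i,\mathbf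 b_{-i})]$. *)

theory Defs
  imports "HOL-Probability.Probability"
begin

text \<open>Bid profiles of n users: vectors in [0,1]^n, represented as functions
  nat => real that are 0 outside the index range {0..<n}.
  (b_i, b_{-i}) is written b(i := x).\<close>
definition bids :: "nat \<Rightarrow> (nat \<Rightarrow> real) set" where
  "bids n = {b. (\<forall>j<n. 0 \<le> b j \<and> b j \<le> 1) \<and> (\<forall>j\<ge>n. b j = 0)}"

definition util ::
  "(nat \<Rightarrow> (nat \<Rightarrow> real) \<Rightarrow> real) \<Rightarrow> (nat \<Rightarrow> (nat \<Rightarrow> real) \<Rightarrow> real)
    \<Rightarrow> nat \<Rightarrow> (nat \<Rightarrow> real) \<Rightarrow> real \<Rightarrow> real" where
  "util a p i b v = a i b * (v - p i b)"

definition TFM_alloc :: "nat \<Rightarrow> (nat \<Rightarrow> (nat \<Rightarrow> real) \<Rightarrow> real) \<Rightarrow> bool" where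
  "TFM_alloc n a = (\<forall>i<n. \<forall>b\<in>bids n. 0 \<le> a i b \<and> a i b \<le> 1)"

definition U_DSIC ::
  "nat \<Rightarrow> (nat \<Rightarrow> (nat \<Rightarrow> real) \<Rightarrow> real) \<Rightarrow> (nat \<Rightarrow> (nat \<Rightarrow> real) \<Rightarrow> real) \<Rightarrow> bool" where
  "U_DSIC n a p = (\<forall>i<n. \<forall>v\<in>{0..1}. \<forall>b\<in>bids n. \<forall>x\<in>{0..1}.
      util a p i (b(i := x)) v \<le> util a p i (b(i := v)) v)"

definition SCP1 ::
  "nat \<Rightarrow> (nat \<Rightarrow> (nat \<Rightarrow> real) \<Rightarrow> real) \<Rightarrow> (nat \<Rightarrow> (nat \<Rightarrow> real) \<Rightarrow> real)
    \<Rightarrow> ((nat \<Rightarrow> real) \<Rightarrow> real) \<Rightarrow> bool" where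
  "SCP1 n a p r = (\<forall>i<n. \<forall>v\<in>{0..1}. \<forall>b\<in>bids n. \<forall>x\<in>{0..1}.
      util a p i (b(i := x)) v + r (b(i := x)) \<le> util a p i (b(i := v)) v + r (b(i := v)))"

text \<open>V i v is the distribution V_{-i} of the other users' (truthful) bids given
  v_i = v, as a measure on bid profiles (the i-th coordinate is irrelevant,
  it is overwritten by user i's bid).\<close>
definition U_BNIC ::
  "nat \<Rightarrow> (nat \<Rightarrow> real \<Rightarrow> (nat \<Rightarrow> real) measure)
    \<Rightarrow> (nat \<Rightarrow> (nat \<Rightarrow> real) \<Rightarrow> real) \<Rightarrow> (nat \<Rightarrow> (nat \<Rightarrow> real) \<Rightarrow> real) \<Rightarrow> bool" where
  "U_BNIC n V a p = (\<forall>i<n. \<forall>v\<in>{0..1}. \<forall>x\<in>{0..1}.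
      (\<integral>bo. util a p i (bo(i := x)) v \<partial>V i v) \<le> (\<integral>bo. util a p i (bo(i := v)) v \<partial>V i v))"

end

theory Submission
  imports Defs
begin

theorem mainTheorem8:
  fixes n :: nat
    and V :: "nat \<Rightarrow> real \<Rightarrow> (nat \<Rightarrow> real) measure"
    and a p \<theta> :: "nat \<Rightarrow> (nat \<Rightarrow> real) \<Rightarrow> real"
  assumes V_prob: "\<And>i v. i < n \<Longrightarrow> v \<in> {0..1} \<Longrightarrow> prob_space (V i v)"
    and V_supp: "\<And>i v. i < n \<Longrightarrow> v \<in> {0..1} \<Longrightarrow> AE bo in V i v. bo \<in> bids n"
    and alloc: "TFM_alloc n a"
    and dsic: "U_DSIC n a p"
    and scp: "SCP1 n a p (\<lambda>_. 0)"
    and util_int: "\<And>i v x w. i < n \<Longrightarrow> v \<in> {0..1} \<Longrightarrow> x \<in> {0..1} \<Longrightarrow>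
        integrable (V i v) (\<lambda>bo. util a p i (bo(i := x)) w)"
    and theta_int: "\<And>i v x. i < n \<Longrightarrow> v \<in> {0..1} \<Longrightarrow> x \<in> {0..1} \<Longrightarrow>
        integrable (V i v) (\<lambda>bo. \<theta> i (bo(i := x)))"
    and theta_mean: "\<And>i v x. i < n \<Longrightarrow> v \<in> {0..1} \<Longrightarrow> x \<in> {0..1} \<Longrightarrow>
        (\<integral>bo. \<theta> i (bo(i := x)) \<partial>V i v) = 0"
    and theta_def: "\<And>i b. i < n \<Longrightarrow> b \<in> bids n \<Longrightarrow> a i b = 0 \<Longrightarrow> \<theta> i b = 0"
  shows "U_BNIC n V a (\<lambda>i b. p i b + \<theta> i b / a i b)"
proof -
  have upd: "bo(i := x) \<in> bids n" if "bo \<in> bids n" "i < n" "x \<in> {0..1}" for bo i x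
    using that unfolding bids_def by auto
  have eq: "util a (\<lambda>i b. p i b + \<theta> i b / a i b) i (bo(i := x)) w
      = util a p i (bo(i := x)) w - \<theta> i (bo(i := x))"
    if "bo \<in> bids n" "i < n" "x \<in> {0..1}" for bo i x w
  proof (cases "a i (bo(i := x)) = 0")
    case True
    then show ?thesis using theta_def[OF that(2) upd[OF that]] by (simp add: util_def)
  next
    case False
    then show ?thesis by (simp add: util_def field_simps)
  qed
  have key: "(\<integral>bo. util a (\<lambda>i b. p i b + \<theta> i b / a i b) i (bo(i := x)) w \<partial>V i v)
      = (\<integral>bo. util a p i (bo(i := x)) w \<partial>V i v)"
    if "i < n" "v \<in> {0..1}" "x \<in> {0..1}" for i v x w
  proof -
    have "(\<integral>bo. util a (\<lambda>i b. p i b + \<theta> i b / a i b) i (bo(i := x)) w \<partial>V i v)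
      = (\<integral>bo. util a p i (bo(i := x)) w - \<theta> i (bo(i := x)) \<partial>V i v)"
    proof (rule integral_cong_AE)
      have m1: "(\<lambda>bo. util a p i (bo(i := x)) 1) \<in> borel_measurable (V i v)"
        and m0: "(\<lambda>bo. util a p i (bo(i := x)) 0) \<in> borel_measurable (V i v)"
        using util_int[OF that] by auto
      have ma: "(\<lambda>bo. a i (bo(i := x))) \<in> borel_measurable (V i v)"
        using borel_measurable_diff[OF m1 m0] by (simp add: util_def algebra_simps)
      have mt: "(\<lambda>bo. \<theta> i (bo(i := x))) \<in> borel_measurable (V i v)"
        using theta_int[OF that] by auto
      have "(\<lambda>bo. util a p i (bo(i := x)) 0 + w * a i (bo(i := x))
          - a i (bo(i := x)) * (\<theta> i (bo(i := x)) / a i (bo(i := x)))) \<in> borel_measurable (V i v)"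
        using m0 ma mt by measurable
      moreover have "(\<lambda>bo. util a (\<lambda>i b. p i b + \<theta> i b / a i b) i (bo(i := x)) w)
        = (\<lambda>bo. util a p i (bo(i := x)) 0 + w * a i (bo(i := x))
          - a i (bo(i := x)) * (\<theta> i (bo(i := x)) / a i (bo(i := x))))"
        by (simp add: util_def algebra_simps)
      ultimately show "(\<lambda>bo. util a (\<lambda>i b. p i b + \<theta> i b / a i b) i (bo(i := x)) w) \<in> borel_measurable (V i v)"
        by simp
      show "(\<lambda>bo. util a p i (bo(i := x)) w - \<theta> i (bo(i := x))) \<in> borel_measurable (V i v)"
        using Bochner_Integration.integrable_diff[OF util_int[OF that] theta_int[OF that]] by auto
      show "AE bo in V i v. util a (\<lambda>i b. p i b + \<theta> i b / a i b) i (bo(i := x)) w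
          = util a p i (bo(i := x)) w - \<theta> i (bo(i := x))"
        using V_supp[OF that(1,2)] eq that by (auto elim!: AE_mp)
    qed
    also have "\<dots> = (\<integral>bo. util a p i (bo(i := x)) w \<partial>V i v) - (\<integral>bo. \<theta> i (bo(i := x)) \<partial>V i v)"
      by (rule Bochner_Integration.integral_diff[OF util_int[OF that] theta_int[OF that]])
    finally show ?thesis using theta_mean[OF that] by simp
  qed
  show ?thesis
    unfolding U_BNIC_def
  proof (intro allI impI ballI)
    fix i :: nat and v x :: real assume i: "i < n" and v: "v \<in> {0..1}" and x: "x \<in> {0..1}"
    have "(\<integral>bo. util a p i (bo(i := x)) v \<partial>V i v) \<le> (\<integral>bo. util a p i (bo(i := v)) v \<partial>V i v)"
      apply (rule integral_mono_AE[OF util_int[OF i v x] util_int[OF i v v]])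
      using V_supp[OF i v] dsic i v x unfolding U_DSIC_def by (auto elim!: AE_mp)
    then show "(\<integral>bo. util a (\<lambda>i b. p i b + \<theta> i b / a i b) i (bo(i := x)) v \<partial>V i v)
      \<le> (\<integral>bo. util a (\<lambda>i b. p i b + \<theta> i b / a i b) i (bo(i := v)) v \<partial>V i v)"
      using key[OF i v x] key[OF i v v] by simp
  qed
qed

end
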